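(* Let $b_1,b_2,b_3\in\mathbb{R}$ with $b_1b_2b_3\neq 0$ and $b_2b_3<0$, and consider the system $$\dot x_1=b_1x_2,\qquad \dot x_2=b_2x_1x_3,\qquad \dot x_3=b_3x_1x_2 .$$ Let $H>0$ be a constant and set $\gamma=\sqrt{-b_3/b_2}$. Then the solution of this system restricted to the constant level surface $$x_2^2-\frac{b_2}{b_3}x_3^2=2H$$ is $$x_1(t)=\frac{\gamma}{b_3}\dot\theta(t),\qquad x_2(t)=\sqrt{2H}\cos\theta(t),\qquad x_3(t)=\gamma\sqrt{2H}\sin\theta(t),$$ where $\theta(t)$ is a solution of the pendulum equation $$\ddot\theta(t)=\frac{b_1b_3}{\gamma}\sqrt{2H}\cos\theta(t).$$ *)

theory Defs
  imports "HOL-Analysis.Analysis"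
begin

end

theory Submission
  imports Defs
begin

lemma antideriv_open_interval:
  fixes g :: "real \<Rightarrow> real"
  assumes I: "is_interval I" "open I" and g: "continuous_on I g" and t0: "t0 \<in> I"
  shows "\<exists>F. \<forall>t\<in>I. (F has_real_derivative g t) (at t)"
proof -
  define F where "F t = (if t0 \<le> t then integral {t0..t} g else - integral {t..t0} g)" for t
  have "(F has_real_derivative g t) (at t)" if t: "t \<in> I" for t
  proof -
    obtain e where e: "e > 0" "ball t e \<subseteq> I" using I(2) t openE by blast
    define a where "a = min t0 (t - e/2)"
    define b where "b = max t0 (t + e/2)"
    have l: "t - e/2 \<in> I" using e by (intro subsetD[OF e(2)]) (simp add: dist_real_def)
    have r: "t + e/2 \<in> I" using e by (intro subsetD[OF e(2)]) (simp add: dist_real_def)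
    have aI: "a \<in> I" unfolding a_def min_def using t0 l by simp
    have bI: "b \<in> I" unfolding b_def max_def using t0 r by simp
    have sub: "{a..b} \<subseteq> I"
    proof
      fix x assume "x \<in> {a..b}"
      then show "x \<in> I" by (intro mem_is_interval_1_I[OF I(1) aI bI]) auto
    qed
    have gc: "continuous_on {a..b} g" using continuous_on_subset[OF g sub] .
    have gi: "\<And>c d. a \<le> c \<Longrightarrow> d \<le> b \<Longrightarrow> g integrable_on {c..d}"
      by (rule integrable_continuous_real, rule continuous_on_subset[OF gc]) auto
    have tab: "t \<in> {a<..<b}" unfolding a_def b_def using e by auto
    have eq: "F x = integral {a..x} g - integral {a..t0} g" if x: "x \<in> {a<..<b}" for x
    proof (cases "t0 \<le> x")
      case True
      have "integral {a..t0} g + integral {t0..x} g = integral {a..x} g"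
        by (rule Henstock_Kurzweil_Integration.integral_combine) (use True x in \<open>auto simp: a_def intro: gi\<close>)
      then show ?thesis using True by (simp add: F_def)
    next
      case False
      have "integral {a..x} g + integral {x..t0} g = integral {a..t0} g"
        by (rule Henstock_Kurzweil_Integration.integral_combine) (use False x in \<open>auto simp: a_def b_def intro: gi\<close>)
      then show ?thesis using False by (simp add: F_def)
    qed
    have D: "((\<lambda>x. integral {a..x} g) has_real_derivative g t) (at t within {a..b})"
      by (rule integral_has_real_derivative[OF gc]) (use tab in auto)
    have int: "t \<in> interior {a..b}" using tab by auto
    have "((\<lambda>x. integral {a..x} g) has_real_derivative g t) (at t)"
      using D unfolding at_within_interior[OF int] .
    then have "((\<lambda>x. integral {a..x} g - integral {a..t0} g) has_real_derivative g t) (at t)"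
      by (auto intro!: derivative_eq_intros)
    then show ?thesis
      by (rule has_field_derivative_transform_within_open[where S="{a<..<b}"])
         (use tab eq in auto)
  qed
  then show ?thesis by blast
qed

theorem proposition2p2:
  fixes b1 b2 b3 H :: real and I :: "real set"
    and x1 x2 x3 :: "real \<Rightarrow> real"
  assumes nz: "b1 * b2 * b3 \<noteq> 0" and neg: "b2 * b3 < 0" and H: "H > 0"
    and I: "is_interval I" "open I"
    and ode1: "\<And>t. t \<in> I \<Longrightarrow> (x1 has_real_derivative (b1 * x2 t)) (at t)"
    and ode2: "\<And>t. t \<in> I \<Longrightarrow> (x2 has_real_derivative (b2 * x1 t * x3 t)) (at t)"
    and ode3: "\<And>t. t \<in> I \<Longrightarrow> (x3 has_real_derivative (b3 * x1 t * x2 t)) (at t)"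
    and level: "\<And>t. t \<in> I \<Longrightarrow> (x2 t)\<^sup>2 - b2 / b3 * (x3 t)\<^sup>2 = 2 * H"
  shows "\<exists>\<theta> \<theta>' :: real \<Rightarrow> real. \<forall>t\<in>I.
           (\<theta> has_real_derivative \<theta>' t) (at t) \<and>
           (\<theta>' has_real_derivative
              (b1 * b3 / sqrt (- b3 / b2) * sqrt (2 * H) * cos (\<theta> t))) (at t) \<and>
           x1 t = sqrt (- b3 / b2) / b3 * \<theta>' t \<and>
           x2 t = sqrt (2 * H) * cos (\<theta> t) \<and>
           x3 t = sqrt (- b3 / b2) * sqrt (2 * H) * sin (\<theta> t)"
proof (cases "I = {}")
  case True then show ?thesis by auto
next
  case False
  then obtain t0 where t0: "t0 \<in> I" by blast
  define \<gamma> where "\<gamma> = sqrt (- b3 / b2)"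
  define R where "R = sqrt (2 * H)"
  have b2: "b2 \<noteq> 0" and b3: "b3 \<noteq> 0" using nz by auto
  have pos: "- b3 / b2 > 0"
  proof -
    have "- b3 / b2 = - (b2 * b3) / b2\<^sup>2" using b2 by (simp add: power2_eq_square field_simps)
    moreover have "b2\<^sup>2 > 0" using b2 by simp
    ultimately show ?thesis using neg by (simp add: divide_neg_pos)
  qed
  have gpos: "\<gamma> > 0" unfolding \<gamma>_def using pos by simp
  have g2: "\<gamma>\<^sup>2 = - b3 / b2" unfolding \<gamma>_def using pos by simp
  have g3: "b3 / \<gamma>\<^sup>2 = - b2" using g2 b2 b3 gpos by (simp add: field_simps)
  have Rpos: "R > 0" unfolding R_def using H by simp
  have R2: "R\<^sup>2 = 2 * H" unfolding R_def using H by simp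
  define c where "c = b3 / \<gamma>"
  define g where "g t = c * x1 t" for t
  have gcont: "continuous_on I g"
  proof -
    have "continuous_on I x1"
      by (rule continuous_at_imp_continuous_on) (use ode1 DERIV_isCont in blast)
    then show ?thesis unfolding g_def by (intro continuous_intros)
  qed
  obtain F where F: "\<And>t. t \<in> I \<Longrightarrow> (F has_real_derivative g t) (at t)"
    using antideriv_open_interval[OF I gcont t0] by blast
  have circ: "(x2 t0 / R)\<^sup>2 + (x3 t0 / (\<gamma> * R))\<^sup>2 = 1"
  proof -
    have i: "1 / \<gamma>\<^sup>2 = - b2 / b3" using g2 by simp
    have "(x3 t0)\<^sup>2 / \<gamma>\<^sup>2 = (1 / \<gamma>\<^sup>2) * (x3 t0)\<^sup>2" by simp
    also have "\<dots> = - b2 / b3 * (x3 t0)\<^sup>2" by (simp only: i)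
    finally have "(x3 t0)\<^sup>2 / \<gamma>\<^sup>2 = - b2 / b3 * (x3 t0)\<^sup>2" .
    then have "(x2 t0)\<^sup>2 + (x3 t0)\<^sup>2 / \<gamma>\<^sup>2 = R\<^sup>2" using level[OF t0] R2 by simp
    then show ?thesis using Rpos gpos by (simp add: power_divide power_mult_distrib field_simps)
  qed
  obtain \<phi>0 where phi: "x2 t0 / R = cos \<phi>0" "x3 t0 / (\<gamma> * R) = sin \<phi>0"
    using sincos_total_2pi[OF circ] by metis
  define \<theta> where "\<theta> t = F t - F t0 + \<phi>0" for t
  have th: "(\<theta> has_real_derivative g t) (at t)" if "t \<in> I" for t
    unfolding \<theta>_def using F[OF that] by (auto intro!: derivative_eq_intros)
  define p where "p t = x2 t * cos (\<theta> t) + (x3 t / \<gamma>) * sin (\<theta> t)" for t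
  define q where "q t = (x3 t / \<gamma>) * cos (\<theta> t) - x2 t * sin (\<theta> t)" for t
  have cI: "convex I" using I(1) by (simp add: is_interval_convex_1)
  have pd: "(p has_real_derivative 0) (at t within I)" if t: "t \<in> I" for t
  proof -
    have "(p has_real_derivative
       (b2 * x1 t * x3 t) * cos (\<theta> t) - x2 t * sin (\<theta> t) * g t
       + (b3 * x1 t * x2 t / \<gamma>) * sin (\<theta> t) + x3 t / \<gamma> * cos (\<theta> t) * g t) (at t)"
      unfolding p_def using ode2[OF t] ode3[OF t] th[OF t] gpos
      apply (auto intro!: derivative_eq_intros)
      by (auto simp: field_simps)
    moreover have "(b2 * x1 t * x3 t) * cos (\<theta> t) - x2 t * sin (\<theta> t) * g t
       + (b3 * x1 t * x2 t / \<gamma>) * sin (\<theta> t) + x3 t / \<gamma> * cos (\<theta> t) * g t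
       = x1 t * x3 t * cos (\<theta> t) * (b2 + b3 / \<gamma>\<^sup>2)"
      unfolding g_def c_def using gpos by (simp add: field_simps power2_eq_square)
    ultimately show ?thesis using g3 by (simp add: has_field_derivative_at_within)
  qed
  have qd: "(q has_real_derivative 0) (at t within I)" if t: "t \<in> I" for t
  proof -
    have "(q has_real_derivative
       (b3 * x1 t * x2 t / \<gamma>) * cos (\<theta> t) - x3 t / \<gamma> * sin (\<theta> t) * g t
       - ((b2 * x1 t * x3 t) * sin (\<theta> t) + x2 t * cos (\<theta> t) * g t)) (at t)"
      unfolding q_def using ode2[OF t] ode3[OF t] th[OF t] gpos
      apply (auto intro!: derivative_eq_intros)
      by (auto simp: field_simps)
    moreover have "(b3 * x1 t * x2 t / \<gamma>) * cos (\<theta> t) - x3 t / \<gamma> * sin (\<theta> t) * g t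
       - ((b2 * x1 t * x3 t) * sin (\<theta> t) + x2 t * cos (\<theta> t) * g t)
       = - x1 t * x3 t * sin (\<theta> t) * (b2 + b3 / \<gamma>\<^sup>2)"
      unfolding g_def c_def using gpos by (simp add: field_simps power2_eq_square)
    ultimately show ?thesis using g3 by (simp add: has_field_derivative_at_within)
  qed
  obtain cp where cp: "\<And>t. t \<in> I \<Longrightarrow> p t = cp"
    using has_field_derivative_zero_constant[OF cI pd] by blast
  obtain cq where cq: "\<And>t. t \<in> I \<Longrightarrow> q t = cq"
    using has_field_derivative_zero_constant[OF cI qd] by blast
  have th0: "\<theta> t0 = \<phi>0" by (simp add: \<theta>_def)
  have x20: "x2 t0 = R * cos \<phi>0" and x30: "x3 t0 / \<gamma> = R * sin \<phi>0"
    using phi Rpos gpos by (auto simp: field_simps)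
  have "p t0 = R * (cos \<phi>0 * cos \<phi>0 + sin \<phi>0 * sin \<phi>0)" unfolding p_def th0 x30 x20
    by (simp add: algebra_simps del: sin_cos_squared_add3)
  then have "p t0 = R" by (simp only: sin_cos_squared_add3 mult_1_right)
  then have pR: "\<And>t. t \<in> I \<Longrightarrow> p t = R" using cp t0 by metis
  have "q t0 = 0" unfolding q_def th0 x30 x20 by simp
  then have q0: "\<And>t. t \<in> I \<Longrightarrow> q t = 0" using cq t0 by metis
  have X2: "x2 t = R * cos (\<theta> t)" if t: "t \<in> I" for t
  proof -
    have "p t * cos (\<theta> t) - q t * sin (\<theta> t) = x2 t * (cos (\<theta> t) * cos (\<theta> t) + sin (\<theta> t) * sin (\<theta> t))"
      unfolding p_def q_def by (simp add: algebra_simps del: sin_cos_squared_add3)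
    then have "x2 t = p t * cos (\<theta> t) - q t * sin (\<theta> t)" by (simp only: sin_cos_squared_add3 mult_1_right)
    then show ?thesis using pR[OF t] q0[OF t] by simp
  qed
  have X3: "x3 t = \<gamma> * R * sin (\<theta> t)" if t: "t \<in> I" for t
  proof -
    have "p t * sin (\<theta> t) + q t * cos (\<theta> t) = x3 t / \<gamma> * (cos (\<theta> t) * cos (\<theta> t) + sin (\<theta> t) * sin (\<theta> t))"
      unfolding p_def q_def by (simp add: algebra_simps del: sin_cos_squared_add3)
    then have "x3 t / \<gamma> = p t * sin (\<theta> t) + q t * cos (\<theta> t)" by (simp only: sin_cos_squared_add3 mult_1_right)
    then show ?thesis using pR[OF t] q0[OF t] gpos by (simp add: field_simps)
  qed
  have main: "\<forall>t\<in>I.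
           (\<theta> has_real_derivative g t) (at t) \<and>
           (g has_real_derivative
              (b1 * b3 / sqrt (- b3 / b2) * sqrt (2 * H) * cos (\<theta> t))) (at t) \<and>
           x1 t = sqrt (- b3 / b2) / b3 * g t \<and>
           x2 t = sqrt (2 * H) * cos (\<theta> t) \<and>
           x3 t = sqrt (- b3 / b2) * sqrt (2 * H) * sin (\<theta> t)"
  proof
    fix t assume t: "t \<in> I"
    have A: "(\<theta> has_real_derivative g t) (at t)" using th[OF t] .
    have "(g has_real_derivative c * (b1 * x2 t)) (at t)"
      unfolding g_def using ode1[OF t] by (auto intro!: derivative_eq_intros)
    moreover have "c * (b1 * x2 t) = b1 * b3 / sqrt (- b3 / b2) * sqrt (2 * H) * cos (\<theta> t)"
      using X2[OF t] unfolding c_def \<gamma>_def R_def by simp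
    ultimately have B: "(g has_real_derivative b1 * b3 / sqrt (- b3 / b2) * sqrt (2 * H) * cos (\<theta> t)) (at t)"
      by simp
    have C: "x1 t = sqrt (- b3 / b2) / b3 * g t"
      unfolding g_def c_def \<gamma>_def[symmetric] using gpos b3 by simp
    have D: "x2 t = sqrt (2 * H) * cos (\<theta> t)" using X2[OF t] R_def by simp
    have E: "x3 t = sqrt (- b3 / b2) * sqrt (2 * H) * sin (\<theta> t)" using X3[OF t] R_def \<gamma>_def by simp
    show "(\<theta> has_real_derivative g t) (at t) \<and>
           (g has_real_derivative
              (b1 * b3 / sqrt (- b3 / b2) * sqrt (2 * H) * cos (\<theta> t))) (at t) \<and>
           x1 t = sqrt (- b3 / b2) / b3 * g t \<and>
           x2 t = sqrt (2 * H) * cos (\<theta> t) \<and>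
           x3 t = sqrt (- b3 / b2) * sqrt (2 * H) * sin (\<theta> t)" using A B C D E by blast
  qed
  then show ?thesis by blast
qed

end
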